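(* Let $G$ be a finite simple graph. If $\chi_c(G) < g(G)$, then $G$ is a cover graph.
   Context: $\chi_c(G)$ is the circular chromatic number of $G$ (the infimum of $k/d$ over all $(k,d)$-colorings, i.e. maps $c:V(G)\to\{0,\dots,k-1\}$ with $d\le |c(x)-c(y)|\le k-d$ for every edge $xy$). $g(G)$ is the girth of $G$ (length of a shortest cycle, $\infty$ if $G$ has no cycles). A graph is a cover graph if it is the underlying (undirected) graph of the Hasse diagram of some finite partially ordered set. *)

theory Defs
  imports Complex_Main "HOL-Library.Extended_Real"
begin

definition simple_graph :: "'a set \<Rightarrow> ('a \<Rightarrow> 'a \<Rightarrow> bool) \<Rightarrow> bool" where
  "simple_graph V E \<longleftrightarrow> finite V \<and> (\<forall>x y. E x y \<longrightarrow> x \<in> V \<and> y \<in> V)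
     \<and> (\<forall>x y. E x y \<longrightarrow> E y x) \<and> (\<forall>x. \<not> E x x)"

definition kd_coloring :: "'a set \<Rightarrow> ('a \<Rightarrow> 'a \<Rightarrow> bool) \<Rightarrow> nat \<Rightarrow> nat \<Rightarrow> ('a \<Rightarrow> nat) \<Rightarrow> bool" where
  "kd_coloring V E k d c \<longleftrightarrow> (\<forall>x\<in>V. c x < k) \<and>
     (\<forall>x y. E x y \<longrightarrow> int d \<le> \<bar>int (c x) - int (c y)\<bar> \<and> \<bar>int (c x) - int (c y)\<bar> \<le> int k - int d)"

definition circular_chromatic_number :: "'a set \<Rightarrow> ('a \<Rightarrow> 'a \<Rightarrow> bool) \<Rightarrow> real" where
  "circular_chromatic_number V E =
     Inf {real k / real d | k d. 1 \<le> k \<and> 1 \<le> d \<and> (\<exists>c. kd_coloring V E k d c)}"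

definition is_cycle :: "'a set \<Rightarrow> ('a \<Rightarrow> 'a \<Rightarrow> bool) \<Rightarrow> 'a list \<Rightarrow> bool" where
  "is_cycle V E cs \<longleftrightarrow> length cs \<ge> 3 \<and> distinct cs \<and> set cs \<subseteq> V \<and>
     (\<forall>i < length cs. E (cs ! i) (cs ! ((i + 1) mod length cs)))"

text \<open>Girth: length of a shortest cycle, \<infinity> if there is none (Inf {} = \<infinity> in enat).\<close>
definition girth :: "'a set \<Rightarrow> ('a \<Rightarrow> 'a \<Rightarrow> bool) \<Rightarrow> enat" where
  "girth V E = Inf {enat (length cs) | cs. is_cycle V E cs}"

definition covers :: "'a set \<Rightarrow> 'a rel \<Rightarrow> 'a \<Rightarrow> 'a \<Rightarrow> bool" where
  "covers V r x y \<longleftrightarrow> (x, y) \<in> r \<and> x \<noteq> y \<and>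
     \<not> (\<exists>z\<in>V. z \<noteq> x \<and> z \<noteq> y \<and> (x, z) \<in> r \<and> (z, y) \<in> r)"

definition cover_graph :: "'a set \<Rightarrow> ('a \<Rightarrow> 'a \<Rightarrow> bool) \<Rightarrow> bool" where
  "cover_graph V E \<longleftrightarrow> (\<exists>r. partial_order_on V r \<and>
     (\<forall>x\<in>V. \<forall>y\<in>V. E x y \<longleftrightarrow> covers V r x y \<or> covers V r y x))"

end

theory Submission
  imports Defs
begin

lemma succ_bound:
  assumes "successively (\<lambda>a b. c a + (d::nat) \<le> c b) ps" "ps \<noteq> []"
  shows "c (hd ps) + (length ps - 1) * d \<le> c (last ps)"
  using assms
proof (induction ps)
  case Nil then show ?case by simp
next
  case (Cons a ps)
  show ?case
  proof (cases ps)
    case Nil then show ?thesis by simp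
  next
    case (Cons b qs)
    have "c a + d \<le> c b" "successively (\<lambda>a b. c a + d \<le> c b) ps"
      using Cons.prems Cons by auto
    with Cons.IH[of] Cons have "c b + (length ps - 1) * d \<le> c (last ps)" by auto
    then show ?thesis using \<open>c a + d \<le> c b\<close> Cons by (simp add: algebra_simps)
  qed
qed

lemma succ_distinct:
  assumes "successively (\<lambda>a b. (c a::nat) < c b) ps"
  shows "distinct ps"
proof -
  have "sorted_wrt (\<lambda>a b. c a < c b) ps"
    using assms successively_conv_sorted_wrt[of "\<lambda>a b. c a < c b"] by (auto simp: transp_def)
  then show ?thesis
    by (induction ps) auto
qed

lemma succ_append:
  assumes "successively P ps" "successively P qs" "ps \<noteq> []" "qs \<noteq> []" "last ps = hd qs"
  shows "successively P (ps @ tl qs)"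
proof (cases qs)
  case Nil then show ?thesis using assms by simp
next
  case (Cons z rs)
  then show ?thesis using assms
    by (cases rs) (auto simp: successively_append_iff successively_Cons)
qed

lemma core:
  assumes G: "simple_graph V E"
    and col: "kd_coloring V E k d c" and d1: "1 \<le> d"
    and cyc: "\<And>cs. is_cycle V E cs \<Longrightarrow> k < d * length cs"
  shows "cover_graph V E"
proof -
  define P where "P = (\<lambda>a b. E a b \<and> c a < c b)"
  define r where "r = {(x,y). \<exists>ps. ps \<noteq> [] \<and> hd ps = x \<and> last ps = y \<and> successively P ps \<and> set ps \<subseteq> V}"
  have Esym: "E x y \<Longrightarrow> E y x" for x y using G by (auto simp: simple_graph_def)
  have Eirr: "\<not> E x x" for x using G by (auto simp: simple_graph_def)
  have EV: "E x y \<Longrightarrow> x \<in> V \<and> y \<in> V" for x y using G by (auto simp: simple_graph_def)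
  have Ed: "E x y \<Longrightarrow> int d \<le> \<bar>int (c x) - int (c y)\<bar> \<and> \<bar>int (c x) - int (c y)\<bar> \<le> int k - int d" for x y
    using col by (auto simp: kd_coloring_def)
  have Pd: "successively P ps \<Longrightarrow> successively (\<lambda>a b. c a + d \<le> c b) ps" for ps
    by (erule successively_mono) (use Ed in \<open>force simp: P_def\<close>)
  have Pl: "successively P ps \<Longrightarrow> successively (\<lambda>a b. c a < c b) ps" for ps
    by (erule successively_mono) (auto simp: P_def)
  have bnd: "successively P ps \<Longrightarrow> ps \<noteq> [] \<Longrightarrow> c (hd ps) + (length ps - 1) * d \<le> c (last ps)" for ps
    using succ_bound Pd by blast
  have len2: "ps \<noteq> [] \<Longrightarrow> hd ps \<noteq> last ps \<Longrightarrow> length ps \<ge> 2" for ps :: "'a list"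
    by (cases ps) (auto split: if_splits simp: Suc_le_eq)
  have noLong: False if ps: "successively P ps" "length ps \<ge> 3" "set ps \<subseteq> V" "E (last ps) (hd ps)" for ps
  proof -
    have ne: "ps \<noteq> []" using ps by auto
    have "is_cycle V E ps"
      unfolding is_cycle_def
    proof (intro conjI allI impI)
      show "3 \<le> length ps" "set ps \<subseteq> V" using ps by auto
      show "distinct ps" using succ_distinct Pl ps(1) by blast
      fix i assume i: "i < length ps"
      show "E (ps ! i) (ps ! ((i + 1) mod length ps))"
      proof (cases "Suc i < length ps")
        case True
        then show ?thesis using successively_nth[OF ps(1) True] by (simp add: P_def)
      next
        case False
        then have "i = length ps - 1" using i by auto
        then have "ps ! i = last ps" "(i + 1) mod length ps = 0" using ne by (auto simp: last_conv_nth)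
        then show ?thesis using ps(4) ne by (simp add: hd_conv_nth)
      qed
    qed
    then have "k < d * length ps" by (rule cyc)
    moreover have "c (hd ps) + (length ps - 1) * d \<le> c (last ps)" using bnd ps ne by blast
    moreover have "int (c (last ps)) - int (c (hd ps)) \<le> int k - int d"
      using Ed[OF ps(4)] by linarith
    ultimately show False using ps(2)
      by (cases "length ps") (auto simp: algebra_simps)
  qed
  have po: "partial_order_on V r"
    unfolding partial_order_on_def preorder_on_def
  proof (intro conjI)
    show "r \<subseteq> V \<times> V"
      unfolding r_def by (auto intro!: hd_in_set last_in_set)
    show "refl_on V r" unfolding refl_on_def r_def
      by (auto intro!: exI[of _ "[x]" for x])
    show "trans r"
    proof (rule transI)
      fix x y z assume "(x, y) \<in> r" "(y, z) \<in> r"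
      then obtain ps qs where a: "ps \<noteq> []" "successively P ps" "set ps \<subseteq> V" "qs \<noteq> []"
        "last ps = hd qs" "successively P qs" "set qs \<subseteq> V" "hd ps = x" "last qs = z"
        unfolding r_def by auto
      show "(x, z) \<in> r" unfolding r_def
      proof (intro CollectI case_prodI exI conjI)
        show "ps @ tl qs \<noteq> []" "hd (ps @ tl qs) = x" using a by auto
        show "last (ps @ tl qs) = z" using a by (cases qs) auto
        show "successively P (ps @ tl qs)" using succ_append a by blast
        show "set (ps @ tl qs) \<subseteq> V" using a by (cases qs) auto
      qed
    qed
    show "antisym r"
    proof (rule antisymI)
      fix x y assume "(x, y) \<in> r" "(y, x) \<in> r"
      then obtain ps qs where a: "ps \<noteq> []" "successively P ps" "qs \<noteq> []"
        "last ps = hd qs" "successively P qs" "last qs = hd ps" "hd ps = x" "hd qs = y"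
        unfolding r_def by auto
      show "x = y"
      proof (rule ccontr)
        assume ne: "x \<noteq> y"
        have "length ps \<ge> 2" "length qs \<ge> 2" using len2 a ne by metis+
        then have "1 * 1 \<le> (length ps - 1) * d" "1 * 1 \<le> (length qs - 1) * d"
          using d1 by (intro mult_le_mono; simp)+
        moreover have "c (hd ps) + (length ps - 1) * d \<le> c (hd qs)"
          using bnd[OF a(2) a(1)] a(4) by simp
        moreover have "c (hd qs) + (length qs - 1) * d \<le> c (hd ps)"
          using bnd[OF a(5) a(3)] a(6) by simp
        ultimately show False
          by linarith
      qed
    qed
  qed
  have e2c: "covers V r x y" if e: "E x y" and lt: "c x < c y" for x y
    unfolding covers_def
  proof (intro conjI)
    show "(x, y) \<in> r" unfolding r_def using e lt EV[OF e]
      by (auto intro!: exI[of _ "[x,y]"] simp: P_def)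
    show "x \<noteq> y" using e Eirr by auto
    show "\<not> (\<exists>z\<in>V. z \<noteq> x \<and> z \<noteq> y \<and> (x, z) \<in> r \<and> (z, y) \<in> r)"
    proof
      assume "\<exists>z\<in>V. z \<noteq> x \<and> z \<noteq> y \<and> (x, z) \<in> r \<and> (z, y) \<in> r"
      then obtain z ps qs where a: "z \<noteq> x" "z \<noteq> y" "ps \<noteq> []" "hd ps = x" "last ps = z"
        "successively P ps" "set ps \<subseteq> V" "qs \<noteq> []" "hd qs = z" "last qs = y"
        "successively P qs" "set qs \<subseteq> V"
        unfolding r_def by auto
      have l: "length ps \<ge> 2" "length qs \<ge> 2" using len2 a by metis+
      show False
      proof (rule noLong[of "ps @ tl qs"])
        show "successively P (ps @ tl qs)" using succ_append a by metis
        show "3 \<le> length (ps @ tl qs)" using l by auto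
        show "set (ps @ tl qs) \<subseteq> V" using a by (cases qs) auto
        have "last (ps @ tl qs) = y" using a by (cases qs) auto
        moreover have "hd (ps @ tl qs) = x" using a by auto
        ultimately show "E (last (ps @ tl qs)) (hd (ps @ tl qs))" using Esym e by simp
      qed
    qed
  qed
  have c2e: "E x y" if cv: "covers V r x y" for x y
  proof -
    from cv obtain ps where a: "ps \<noteq> []" "hd ps = x" "last ps = y" "successively P ps" "set ps \<subseteq> V"
      and xy: "x \<noteq> y" and nz: "\<not> (\<exists>z\<in>V. z \<noteq> x \<and> z \<noteq> y \<and> (x, z) \<in> r \<and> (z, y) \<in> r)"
      unfolding covers_def r_def by auto
    have l: "length ps \<ge> 2" using len2 a xy by metis
    then obtain u v rs where ps: "ps = u # v # rs" by (cases ps; cases "tl ps") auto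
    show ?thesis
    proof (cases rs)
      case Nil then show ?thesis using a ps by (simp add: P_def)
    next
      case (Cons w ts)
      have s: "successively P (v # rs)" "P u v" using a ps by auto
      have "c (hd (v#rs)) + (length (v#rs) - 1) * d \<le> c (last (v#rs))" using bnd[OF s(1)] by simp
      then have "c v < c y" using a ps Cons d1 by auto
      moreover have "c x < c v" using s a ps by (simp add: P_def)
      moreover have "(x, v) \<in> r" unfolding r_def using a ps s
        by (auto intro!: exI[of _ "[u,v]"])
      moreover have "(v, y) \<in> r" unfolding r_def using a ps s
        by (auto intro!: exI[of _ "v#rs"])
      moreover have "v \<in> V" using a ps by auto
      ultimately show ?thesis using nz by auto
    qed
  qed
  show ?thesis unfolding cover_graph_def
  proof (intro exI conjI ballI)
    show "partial_order_on V r" by (rule po)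
    fix x y assume "x \<in> V" "y \<in> V"
    show "E x y = (covers V r x y \<or> covers V r y x)"
    proof
      assume e: "E x y"
      have "c x \<noteq> c y" using Ed[OF e] d1 by auto
      then show "covers V r x y \<or> covers V r y x"
        using e2c[OF e] e2c[OF Esym[OF e]] by (cases "c x < c y") auto
    next
      assume "covers V r x y \<or> covers V r y x"
      then show "E x y" using c2e Esym by blast
    qed
  qed
qed

theorem theorem14:
  fixes V :: "'a set" and E :: "'a \<Rightarrow> 'a \<Rightarrow> bool"
  assumes "simple_graph V E"
    and "ereal (circular_chromatic_number V E) < ereal_of_enat (girth V E)"
  shows "cover_graph V E"
proof -
  define S where "S = {real k / real d | k d. 1 \<le> k \<and> 1 \<le> d \<and> (\<exists>c. kd_coloring V E k d c)}"
  have fin: "finite V" using assms(1) by (simp add: simple_graph_def)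
  then obtain f and n :: nat where f: "f ` V = {i. i < n}" "inj_on f V"
    using finite_imp_inj_to_nat_seg[OF fin] by metis
  have "kd_coloring V E (n+1) 1 f"
    unfolding kd_coloring_def
  proof (intro conjI ballI allI impI)
    fix x assume "x \<in> V"
    then have "f x \<in> f ` V" by (rule imageI)
    then show "f x < n + 1" using f(1) by simp
  next
    fix x y assume e: "E x y"
    then have xy: "x \<in> V" "y \<in> V" "x \<noteq> y" using assms(1) by (auto simp: simple_graph_def)
    then have "f x \<noteq> f y" "f x < n" "f y < n" using f by (auto simp: inj_on_def)
    then show "int 1 \<le> \<bar>int (f x) - int (f y)\<bar>" "\<bar>int (f x) - int (f y)\<bar> \<le> int (n + 1) - int 1"
      by auto
  qed
  then have Sne: "S \<noteq> {}" unfolding S_def by fastforce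
  have Sbdd: "bdd_below S" unfolding S_def by (rule bdd_belowI[of _ 0]) auto
  have "\<exists>s\<in>S. ereal s < ereal_of_enat (girth V E)"
  proof (cases "girth V E")
    case (enat g)
    then have "Inf S < real g" using assms(2) unfolding circular_chromatic_number_def S_def by simp
    then obtain s where "s \<in> S" "s < real g" using cInf_lessD[OF Sne] by blast
    then show ?thesis using enat by auto
  next
    case infinity
    then show ?thesis using Sne by auto
  qed
  then obtain k d c where kd: "1 \<le> k" "1 \<le> d" "kd_coloring V E k d c"
    and lt: "ereal (real k / real d) < ereal_of_enat (girth V E)"
    unfolding S_def by blast
  show ?thesis
  proof (rule core[OF assms(1) kd(3) kd(2)])
    fix cs assume "is_cycle V E cs"
    then have "girth V E \<le> enat (length cs)" unfolding girth_def by (auto intro: Inf_lower)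
    then have "ereal_of_enat (girth V E) \<le> ereal_of_enat (enat (length cs))"
      using ereal_of_enat_le_iff by blast
    with lt have "ereal (real k / real d) < ereal_of_enat (enat (length cs))"
      by (rule less_le_trans)
    then have "real k / real d < real (length cs)" by simp
    then have "real k < real d * real (length cs)" using kd by (simp add: field_simps)
    then show "k < d * length cs" by (simp flip: of_nat_mult)
  qed
qed

end
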